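(* For every $c>0$ there is $C>0$ such that the following holds. Let $h\ge1$, $P\in\mathcal C(h)$, and suppose ${\rm diam}_2(P_i)\le\Delta\cdot{\rm diam}_2(P)$ for every hole $P_i$, where $\Delta\le c/h$. Then for every $s\in P$ there is a path in $P$ from $s$ to a point of $\partial P_0$ of length at most $C\,{\rm diam}_2(P)$.
   Context: $\mathcal C(h)$ is the family of polygonal domains $P=P_0\setminus\bigcup_{i=1}^h\operatorname{int}(P_i)$ with $P_0$ a convex polygon and $P_1,\dots,P_h$ pairwise disjoint convex polygons (holes) in the interior of $P_0$; ${\rm diam}_2(\cdot)$ denotes Euclidean diameter. *)

theory Defs
  imports "HOL-Analysis.Analysis"
begin

definition convex_polygon :: "(real^2) set \<Rightarrow> bool" where
  "convex_polygon S \<longleftrightarrow> (\<exists>V. finite V \<and> S = convex hull V) \<and> interior S \<noteq> {}"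

definition path_length :: "(real \<Rightarrow> 'a::metric_space) \<Rightarrow> ereal" where
  "path_length g = (SUP tn \<in> {(t, n). t 0 = 0 \<and> t n = 1 \<and> (\<forall>i<n. t i \<le> t (Suc i))}.
      ereal (\<Sum>i<snd tn. dist (g (fst tn i)) (g (fst tn (Suc i)))))"

definition poly_domain :: "(real^2) set \<Rightarrow> (nat \<Rightarrow> (real^2) set) \<Rightarrow> nat \<Rightarrow> (real^2) set" where
  "poly_domain P0 H h = P0 - (\<Union>i\<in>{1..h}. interior (H i))"

definition in_class_C :: "(real^2) set \<Rightarrow> (nat \<Rightarrow> (real^2) set) \<Rightarrow> nat \<Rightarrow> bool" where
  "in_class_C P0 H h \<longleftrightarrow> convex_polygon P0 \<and>
     (\<forall>i\<in>{1..h}. convex_polygon (H i) \<and> H i \<subseteq> interior P0) \<and>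
     (\<forall>i\<in>{1..h}. \<forall>j\<in>{1..h}. i \<noteq> j \<longrightarrow> H i \<inter> H j = {})"

end

theory Submission
  imports Defs
begin


definition ctrl :: "(real \<Rightarrow> 'a::metric_space) \<Rightarrow> real \<Rightarrow> bool" where
 "ctrl g L \<longleftrightarrow> (\<exists>\<Phi>. \<Phi> 1 - \<Phi> 0 \<le> L \<and>
    (\<forall>s t. 0 \<le> s \<longrightarrow> s \<le> t \<longrightarrow> t \<le> 1 \<longrightarrow> dist (g s) (g t) \<le> \<Phi> t - \<Phi> s))"

lemma chain_mono:
  fixes t :: "nat \<Rightarrow> real"
  assumes "\<forall>i<n. t i \<le> t (Suc i)" "i \<le> j" "j \<le> n"
  shows "t i \<le> t j"
  using assms
proof (induction j)
  case 0 then show ?case by simp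
next
  case (Suc j)
  show ?case
  proof (cases "i = Suc j")
    case True then show ?thesis by simp
  next
    case False
    then have "i \<le> j" using Suc.prems by simp
    then have "t i \<le> t j" using Suc by simp
    also have "t j \<le> t (Suc j)" using Suc.prems by simp
    finally show ?thesis .
  qed
qed

lemma ctrl_length:
  assumes "ctrl g L"
  shows "path_length g \<le> ereal L"
proof -
  obtain \<Phi> where P: "\<Phi> 1 - \<Phi> 0 \<le> L"
    "\<And>s t. 0 \<le> s \<Longrightarrow> s \<le> t \<Longrightarrow> t \<le> 1 \<Longrightarrow> dist (g s) (g t) \<le> \<Phi> t - \<Phi> s"
    using assms unfolding ctrl_def by blast
  show ?thesis unfolding path_length_def
  proof (rule SUP_least)
    fix tn :: "(nat \<Rightarrow> real) \<times> nat" assume "tn \<in> {(t, n). t 0 = 0 \<and> t n = 1 \<and> (\<forall>i<n. t i \<le> t (Suc i))}"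
    then obtain t n where tn: "tn = (t,n)" "t 0 = 0" "t n = 1" "\<forall>i<n. t i \<le> t (Suc i)" by blast
    have "(\<Sum>i<n. dist (g (t i)) (g (t (Suc i)))) \<le> (\<Sum>i<n. \<Phi> (t (Suc i)) - \<Phi> (t i))"
    proof (rule sum_mono)
      fix i assume "i \<in> {..<n}"
      then have i: "i < n" by simp
      have "t 0 \<le> t i" using chain_mono[OF tn(4), of 0 i] i by simp
      moreover have "t (Suc i) \<le> t n" using chain_mono[OF tn(4), of "Suc i" n] i by simp
      ultimately show "dist (g (t i)) (g (t (Suc i))) \<le> \<Phi> (t (Suc i)) - \<Phi> (t i)"
        using P(2) tn i by simp
    qed
    also have "\<dots> = \<Phi> 1 - \<Phi> 0" using sum_lessThan_telescope[of "\<lambda>i. \<Phi> (t i)" n] tn by simp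
    finally show "ereal (\<Sum>i<snd tn. dist (g (fst tn i)) (g (fst tn (Suc i)))) \<le> ereal L"
      using P(1) tn by simp
  qed
qed

lemma ctrl_mono: "ctrl g L \<Longrightarrow> L \<le> L' \<Longrightarrow> ctrl g L'"
  unfolding ctrl_def by force

lemma ctrl_linepath: "ctrl (linepath a b :: real \<Rightarrow> 'a::real_normed_vector) (dist a b)"
  unfolding ctrl_def
proof (intro exI[of _ "\<lambda>t. t * dist a b"] conjI allI impI)
  fix s t :: real assume st: "0 \<le> s" "s \<le> t" "t \<le> 1"
  have "linepath a b s - linepath a b t = (t - s) *\<^sub>R (a - b)"
    unfolding linepath_def by (simp add: algebra_simps)
  then have "dist (linepath a b s) (linepath a b t) = (t - s) * dist a b"
    using st by (simp add: dist_norm)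
  then show "dist (linepath a b s) (linepath a b t) \<le> t * dist a b - s * dist a b"
    by (simp add: algebra_simps)
qed simp

lemma ctrl_join:
  assumes "ctrl g1 L1" "ctrl g2 L2" "pathfinish g1 = pathstart g2"
  shows "ctrl (g1 +++ g2) (L1 + L2)"
proof -
  obtain \<Phi>1 where P1: "\<Phi>1 1 - \<Phi>1 0 \<le> L1"
    "\<And>s t. 0 \<le> s \<Longrightarrow> s \<le> t \<Longrightarrow> t \<le> 1 \<Longrightarrow> dist (g1 s) (g1 t) \<le> \<Phi>1 t - \<Phi>1 s"
    using assms(1) unfolding ctrl_def by blast
  obtain \<Phi>2 where P2: "\<Phi>2 1 - \<Phi>2 0 \<le> L2"
    "\<And>s t. 0 \<le> s \<Longrightarrow> s \<le> t \<Longrightarrow> t \<le> 1 \<Longrightarrow> dist (g2 s) (g2 t) \<le> \<Phi>2 t - \<Phi>2 s"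
    using assms(2) unfolding ctrl_def by blast
  have e: "g1 1 = g2 0" using assms(3) by (simp add: pathfinish_def pathstart_def)
  define \<Phi> where "\<Phi> t = (if t \<le> 1/2 then \<Phi>1 (2*t) else \<Phi>1 1 - \<Phi>2 0 + \<Phi>2 (2*t-1))" for t :: real
  show ?thesis unfolding ctrl_def
  proof (intro exI[of _ \<Phi>] conjI allI impI)
    show "\<Phi> 1 - \<Phi> 0 \<le> L1 + L2" using P1(1) P2(1) by (simp add: \<Phi>_def)
  next
    fix s t :: real assume st: "0 \<le> s" "s \<le> t" "t \<le> 1"
    show "dist ((g1 +++ g2) s) ((g1 +++ g2) t) \<le> \<Phi> t - \<Phi> s"
    proof (cases "t \<le> 1/2")
      case True
      have "dist (g1 (2* s)) (g1 (2*t)) \<le> \<Phi>1 (2*t) - \<Phi>1 (2* s)" using P1(2) st True by simp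
      then show ?thesis using st True by (simp add: joinpaths_def \<Phi>_def)
    next
      case tF: False
      show ?thesis
      proof (cases "s \<le> 1/2")
        case True
        have "dist (g1 (2* s)) (g2 (2*t-1)) \<le> dist (g1 (2* s)) (g1 1) + dist (g2 0) (g2 (2*t-1))"
          using dist_triangle[of "g1 (2* s)" "g2 (2*t-1)" "g1 1"] e by (simp add: dist_commute)
        also have "\<dots> \<le> (\<Phi>1 1 - \<Phi>1 (2* s)) + (\<Phi>2 (2*t-1) - \<Phi>2 0)"
          using P1(2)[of "2* s" 1] P2(2)[of 0 "2*t-1"] st True tF by simp
        finally show ?thesis using True tF by (simp add: joinpaths_def \<Phi>_def)
      next
        case False
        then show ?thesis using P2(2)[of "2* s-1" "2*t-1"] st tF by (simp add: joinpaths_def \<Phi>_def)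
      qed
    qed
  qed
qed



definition mk :: "real \<Rightarrow> real \<Rightarrow> real^2" where
  "mk x y = (\<chi> i. if i = 1 then x else y)"

lemma mk_nth [simp]: "mk x y $ 1 = x" "mk x y $ 2 = y"
  unfolding mk_def by auto

lemma mk_eta: "mk (p$1) (p$2) = p"
  unfolding mk_def vec_eq_iff forall_2 by simp

lemma mk_eq_iff: "mk a b = mk c d \<longleftrightarrow> a = c \<and> b = d"
  by (metis mk_nth)

lemma mk_comb: "(1 - u) *\<^sub>R mk a b + u *\<^sub>R mk c d = mk ((1-u)*a + u*c) ((1-u)*b + u*d)"
  unfolding mk_def vec_eq_iff forall_2 by simp

lemma mk_diff: "mk a b - mk c d = mk (a - c) (b - d)"
  unfolding mk_def vec_eq_iff forall_2 by simp

lemma dist_mk_le: "dist (mk a b) (mk c d) \<le> \<bar>a - c\<bar> + \<bar>b - d\<bar>"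
proof -
  have "dist (mk a b) (mk c d) = norm (mk (a-c) (b-d))" by (simp add: dist_norm mk_diff)
  also have "\<dots> \<le> (\<Sum>i\<in>UNIV. \<bar>mk (a-c) (b-d) $ i\<bar>)" by (rule norm_le_l1_cart)
  also have "\<dots> = \<bar>a - c\<bar> + \<bar>b - d\<bar>" by (simp add: sum_2)
  finally show ?thesis .
qed

lemma continuous_on_mk [continuous_intros]:
  "continuous_on S f \<Longrightarrow> continuous_on S g \<Longrightarrow> continuous_on S (\<lambda>t. mk (f t) (g t))"
  unfolding mk_def
proof (intro continuous_intros)
  fix i :: 2
  assume "continuous_on S f" "continuous_on S g"
  then show "continuous_on S (\<lambda>x. if i = 1 then f x else g x)" by (cases "i = 1") auto
qed

lemma interior_mk:
  assumes "p \<in> interior S"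
  shows "\<exists>e>0. \<forall>d. \<bar>d\<bar> < e \<longrightarrow> mk (p$1 + d) (p$2) \<in> S \<and> mk (p$1) (p$2 + d) \<in> S"
proof -
  obtain e where e: "e > 0" "ball p e \<subseteq> S" using assms by (meson mem_interior)
  have "mk (p$1 + d) (p$2) \<in> S \<and> mk (p$1) (p$2 + d) \<in> S" if "\<bar>d\<bar> < e" for d
  proof -
    have "dist p (mk (p$1 + d) (p$2)) \<le> \<bar>d\<bar>"
      using dist_mk_le[of "p$1" "p$2" "p$1 + d" "p$2"] by (simp add: mk_eta)
    moreover have "dist p (mk (p$1) (p$2 + d)) \<le> \<bar>d\<bar>"
      using dist_mk_le[of "p$1" "p$2" "p$1" "p$2 + d"] by (simp add: mk_eta)
    ultimately show ?thesis using e that by (auto simp: subset_iff)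
  qed
  then show ?thesis using e by blast
qed

lemma seg_coord:
  fixes a b p :: "real^2"
  assumes "p \<in> closed_segment a b" "a$1 = b$1" "a$2 \<le> b$2"
  shows "p$1 = a$1 \<and> a$2 \<le> p$2 \<and> p$2 \<le> b$2"
proof -
  obtain u where u: "0 \<le> u" "u \<le> 1" "p = (1 - u) *\<^sub>R a + u *\<^sub>R b"
    using assms(1) by (auto simp: in_segment)
  have "p$1 = (1-u) * a$1 + u * b$1" "p$2 = (1-u) * a$2 + u * b$2" using u by auto
  moreover have "(1-u) * a$2 + u * b$2 \<ge> (1-u) * a$2 + u * a$2"
    using u assms(3) by (intro add_left_mono mult_left_mono) auto
  moreover have "(1-u) * a$2 + u * b$2 \<le> (1-u) * b$2 + u * b$2"
    using u assms(3) by (intro add_right_mono mult_left_mono) auto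
  ultimately show ?thesis using assms(2) by (simp add: algebra_simps)
qed

definition lo :: "(real^2) set \<Rightarrow> real \<Rightarrow> real" where
  "lo K t = Inf {y. mk t y \<in> K}"

lemma bounded_slice:
  assumes "bounded K" shows "bdd_below {y. mk t y \<in> K}" "bdd_above {y. mk t y \<in> K}"
proof -
  obtain M where M: "\<forall>p\<in>K. norm p \<le> M" using assms bounded_iff by blast
  have "\<bar>y\<bar> \<le> M" if "mk t y \<in> K" for y
    using component_le_norm_cart[of "mk t y" 2] M that by force
  then show "bdd_below {y. mk t y \<in> K}" "bdd_above {y. mk t y \<in> K}"
    unfolding bdd_below_def bdd_above_def by (metis abs_le_iff minus_le_iff mem_Collect_eq)+
qed

lemma closed_slice:
  assumes "closed K" shows "closed {y. mk t y \<in> K}"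
proof -
  have "continuous_on UNIV (\<lambda>y. mk t y)" by (intro continuous_intros)
  then show ?thesis using continuous_closed_vimage[OF assms, of "mk t"] by (simp add: continuous_on_eq_continuous_at vimage_def)
qed

lemma lo_mem:
  assumes "compact K" "mk t y0 \<in> K"
  shows "mk t (lo K t) \<in> K" "lo K t \<le> y0"
proof -
  have "Inf {y. mk t y \<in> K} \<in> {y. mk t y \<in> K}"
    using assms by (intro closed_contains_Inf closed_slice bounded_slice) (auto dest: compact_imp_closed compact_imp_bounded)
  then show "mk t (lo K t) \<in> K" by (simp add: lo_def)
  show "lo K t \<le> y0" unfolding lo_def
    using assms by (intro cInf_lower bounded_slice) (auto dest: compact_imp_bounded)
qed

lemma lo_convex:
  assumes "compact K" "convex K" "mk s ys \<in> K" "mk t yt \<in> K" "0 \<le> u" "u \<le> 1"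
  shows "lo K ((1-u)* s + u*t) \<le> (1-u) * lo K s + u * lo K t"
proof -
  have "(1 - u) *\<^sub>R mk s (lo K s) + u *\<^sub>R mk t (lo K t) \<in> K"
    using assms lo_mem[OF assms(1,3)] lo_mem[OF assms(1,4)]
    by (intro convexD_alt) auto
  then have "mk ((1-u)* s + u*t) ((1-u) * lo K s + u * lo K t) \<in> K" by (simp add: mk_comb)
  then show ?thesis using lo_mem(2)[OF assms(1)] by blast
qed

lemma lo_lsc:
  assumes "compact K" "\<forall>t\<in>{a..b}. \<exists>y. mk t y \<in> K" "t0 \<in> {a..b}" "e > 0"
  shows "\<exists>d>0. \<forall>t\<in>{a..b}. \<bar>t - t0\<bar> < d \<longrightarrow> lo K t0 - e < lo K t"
proof -
  define K' where "K' = K \<inter> {p. p$2 \<le> lo K t0 - e}"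
  have "closed {p::real^2. p$2 \<le> lo K t0 - e}"
    by (intro closed_Collect_le continuous_intros)
  then have "compact K'" unfolding K'_def using assms(1) by (intro compact_Int_closed)
  then have "compact ((\<lambda>p. p$1) ` K')" by (intro compact_continuous_image continuous_intros)
  then have cl: "closed ((\<lambda>p. p$1) ` K')" by (rule compact_imp_closed)
  have nt: "t0 \<notin> (\<lambda>p. p$1) ` K'"
  proof
    assume "t0 \<in> (\<lambda>p. p$1) ` K'"
    then obtain p where p: "p \<in> K" "p$1 = t0" "p$2 \<le> lo K t0 - e" by (auto simp: K'_def)
    then have "mk t0 (p$2) \<in> K" using mk_eta[of p] by simp
    then have "lo K t0 \<le> p$2" using lo_mem(2)[OF assms(1)] by blast
    then show False using p assms(4) by simp
  qed
  have "open (- (\<lambda>p. p$1) ` K')" using cl by (simp add: open_Compl)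
  then obtain d where d: "d > 0" "ball t0 d \<subseteq> - (\<lambda>p. p$1) ` K'"
    using nt by (meson ComplI open_contains_ball)
  have "lo K t0 - e < lo K t" if t: "t \<in> {a..b}" "\<bar>t - t0\<bar> < d" for t
  proof (rule ccontr)
    assume "\<not> ?thesis"
    obtain y where "mk t y \<in> K" using assms(2) t by blast
    then have "mk t (lo K t) \<in> K" using lo_mem(1)[OF assms(1)] by blast
    moreover assume "\<not> lo K t0 - e < lo K t"
    ultimately have "t \<in> (\<lambda>p. p$1) ` K'" unfolding K'_def by (force intro: image_eqI[of _ _ "mk t (lo K t)"])
    moreover have "t \<in> ball t0 d" using t by (simp add: dist_real_def abs_minus_commute)
    ultimately show False using d by blast
  qed
  then show ?thesis using d by blast
qed



definition convex_on_ab :: "real \<Rightarrow> real \<Rightarrow> (real \<Rightarrow> real) \<Rightarrow> bool" where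
  "convex_on_ab a b f \<longleftrightarrow> (\<forall>x y u. x \<in> {a..b} \<longrightarrow> y \<in> {a..b} \<longrightarrow> 0 \<le> u \<longrightarrow> u \<le> 1 \<longrightarrow>
      f ((1-u)*x + u*y) \<le> (1-u) * f x + u * f y)"

lemma usc_side:
  assumes cv: "convex_on_ab a b f" and bnd: "\<forall>t\<in>{a..b}. \<bar>f t\<bar> \<le> M"
    and t0: "t0 \<in> {a..b}" and w: "w \<in> {a..b}" and tw: "t \<in> closed_segment t0 w" "t \<noteq> t0"
    and sm: "\<bar>t - t0\<bar> * (2*M+1) < e * \<bar>w - t0\<bar>"
  shows "f t < f t0 + e"
proof -
  have wt: "w \<noteq> t0" using tw by auto
  define u where "u = \<bar>t - t0\<bar> / \<bar>w - t0\<bar>"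
  have tu: "t = (1-u)*t0 + u*w"
  proof (cases "t0 \<le> w")
    case True
    then have "t0 \<le> t" "t \<le> w" using tw by (auto simp: closed_segment_eq_real_ivl)
    then have "w - t0 > 0" "\<bar>w - t0\<bar> = w - t0" "\<bar>t - t0\<bar> = t - t0" using wt True by auto
    then have "u * (w - t0) = t - t0" unfolding u_def by simp
    then show ?thesis by (simp add: algebra_simps)
  next
    case False
    then have "w \<le> t" "t \<le> t0" using tw by (auto simp: closed_segment_eq_real_ivl split: if_splits)
    then have "t0 - w > 0" "\<bar>w - t0\<bar> = t0 - w" "\<bar>t - t0\<bar> = t0 - t" using wt False by auto
    then have "u * (t0 - w) = t0 - t" unfolding u_def by simp
    then show ?thesis by (simp add: algebra_simps)
  qed
  have u01: "0 \<le> u" "u \<le> 1"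
    using tw wt by (auto simp: u_def closed_segment_eq_real_ivl divide_le_eq_1 split: if_splits)
  have "f t \<le> (1-u) * f t0 + u * f w" using cv t0 w u01 tu unfolding convex_on_ab_def by blast
  also have "\<dots> = f t0 + u * (f w - f t0)" by (simp add: algebra_simps)
  also have "u * (f w - f t0) \<le> u * (2*M+1)"
  proof -
    have "f w - f t0 \<le> 2*M+1" using bnd t0 w by (smt (verit, best))
    then show ?thesis using u01 by (intro mult_left_mono) auto
  qed
  also have "u * (2*M+1) < e"
    using sm wt unfolding u_def by (simp add: field_simps)
  finally show ?thesis by simp
qed

lemma convex_lsc_cont:
  assumes cv: "convex_on_ab a b f" and bnd: "\<forall>t\<in>{a..b}. \<bar>f t\<bar> \<le> M"
    and lsc: "\<forall>t0\<in>{a..b}. \<forall>e>0. \<exists>d>0. \<forall>t\<in>{a..b}. \<bar>t - t0\<bar> < d \<longrightarrow> f t0 - e < f t"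
  shows "continuous_on {a..b} f"
  unfolding continuous_on_iff
proof (intro ballI allI impI)
  fix t0 e :: real assume t0: "t0 \<in> {a..b}" and e: "e > 0"
  have M: "M \<ge> 0" using bnd t0 by force
  obtain d1 where d1: "d1 > 0" "\<forall>t\<in>{a..b}. \<bar>t - t0\<bar> < d1 \<longrightarrow> f t0 - e < f t" using lsc t0 e by blast
  define dR where "dR = (if t0 < b then e*(b-t0)/(2*M+1) else 1)"
  define dL where "dL = (if a < t0 then e*(t0-a)/(2*M+1) else 1)"
  have dRp: "dR > 0" using e M by (simp add: dR_def)
  have dLp: "dL > 0" using e M by (simp add: dL_def)
  define d where "d = min d1 (min dR dL)"
  show "\<exists>d>0. \<forall>t\<in>{a..b}. dist t t0 < d \<longrightarrow> dist (f t) (f t0) < e"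
  proof (intro exI[of _ d] conjI ballI impI)
    show "d > 0" using d1 dRp dLp by (simp add: d_def)
  next
    fix t assume t: "t \<in> {a..b}" "dist t t0 < d"
    have lo: "f t0 - e < f t" using d1 t by (simp add: d_def dist_real_def)
    have hi: "f t < f t0 + e"
    proof (cases "t = t0")
      case True then show ?thesis using e by simp
    next
      case False
      show ?thesis
      proof (cases "t0 < t")
        case True
        then have "t0 < b" using t by simp
        have "\<bar>t - t0\<bar> < e*(b-t0)/(2*M+1)" using t \<open>t0 < b\<close> by (simp add: d_def dR_def dist_real_def)
        then have "\<bar>t - t0\<bar> * (2*M+1) < e * \<bar>b - t0\<bar>" using M \<open>t0 < b\<close> by (simp add: field_simps)
        then show ?thesis
          using usc_side[OF cv bnd t0, of b t e] t True t0 False by (auto simp: closed_segment_eq_real_ivl)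
      next
        case False': False
        then have tl: "t < t0" using False by simp
        then have "a < t0" using t by simp
        have "\<bar>t - t0\<bar> < e*(t0-a)/(2*M+1)" using t \<open>a < t0\<close> by (simp add: d_def dL_def dist_real_def)
        then have "\<bar>t - t0\<bar> * (2*M+1) < e * \<bar>a - t0\<bar>" using M \<open>a < t0\<close> by (simp add: field_simps)
        then show ?thesis
          using usc_side[OF cv bnd t0, of a t e] t tl t0 False by (auto simp: closed_segment_eq_real_ivl)
      qed
    qed
    show "dist (f t) (f t0) < e" using lo hi by (simp add: dist_real_def abs_less_iff)
  qed
qed

lemma convex_dec:
  assumes cv: "convex_on_ab a b f" and "a \<le> x" "x \<le> y" "y \<le> m" "m \<le> b" "f m \<le> f x"
  shows "f y \<le> f x"
proof (cases "x = m")
  case True then show ?thesis using assms by simp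
next
  case False
  define u where "u = (y - x)/(m - x)"
  have u01: "0 \<le> u" "u \<le> 1" using assms False by (auto simp: u_def divide_le_eq_1)
  have "m - x > 0" using False assms by simp
  then have "u * (m - x) = y - x" unfolding u_def by simp
  then have "y = (1-u)*x + u*m" by (simp add: algebra_simps)
  then have "f y \<le> (1-u) * f x + u * f m" using cv assms u01 unfolding convex_on_ab_def by auto
  also have "\<dots> \<le> (1-u) * f x + u * f x" using u01 assms by (intro add_left_mono mult_left_mono) auto
  finally show ?thesis by (simp add: algebra_simps)
qed

lemma convex_inc:
  assumes cv: "convex_on_ab a b f" and "a \<le> m" "m \<le> x" "x \<le> y" "y \<le> b" "f m \<le> f y"
  shows "f x \<le> f y"
proof (cases "y = m")
  case True then show ?thesis using assms by simp
next
  case False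
  define u where "u = (x - m)/(y - m)"
  have u01: "0 \<le> u" "u \<le> 1" using assms False by (auto simp: u_def divide_le_eq_1)
  have "y - m > 0" using False assms by simp
  then have "u * (y - m) = x - m" unfolding u_def by simp
  then have "x = (1-u)*m + u*y" by (simp add: algebra_simps)
  then have "f x \<le> (1-u) * f m + u * f y" using cv assms u01 unfolding convex_on_ab_def by auto
  also have "\<dots> \<le> (1-u) * f y + u * f y" using u01 assms by (intro add_right_mono mult_left_mono) auto
  finally show ?thesis by (simp add: algebra_simps)
qed



lemma dist_ge_comp2: "\<bar>p$2 - q$2\<bar> \<le> dist p (q::real^2)"
  using component_le_norm_cart[of "p - q" 2] by (simp add: dist_norm)

lemma dist_ge_comp1: "\<bar>p$1 - q$1\<bar> \<le> dist p (q::real^2)"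
  using component_le_norm_cart[of "p - q" 1] by (simp add: dist_norm)

lemma lo_props:
  assumes K: "compact K" "convex K" and sl: "\<forall>t\<in>{a..b}. \<exists>y. mk t y \<in> K"
  shows "convex_on_ab a b (lo K)" "continuous_on {a..b} (lo K)"
    "\<And>t. t \<in> {a..b} \<Longrightarrow> mk t (lo K t) \<in> K"
proof -
  show cv: "convex_on_ab a b (lo K)" unfolding convex_on_ab_def
    using sl lo_convex[OF K] by metis
  show mem: "\<And>t. t \<in> {a..b} \<Longrightarrow> mk t (lo K t) \<in> K" using sl lo_mem(1)[OF K(1)] by blast
  obtain M where M: "\<forall>p\<in>K. norm p \<le> M" using K(1) compact_imp_bounded bounded_iff by blast
  have bnd: "\<forall>t\<in>{a..b}. \<bar>lo K t\<bar> \<le> M"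
    using mem M component_le_norm_cart[of "mk _ (lo K _)" 2] by (metis mk_nth(2) order.trans)
  show "continuous_on {a..b} (lo K)"
    by (rule convex_lsc_cont[OF cv bnd]) (use lo_lsc[OF K(1) sl] in blast)
qed

lemma chain:
  assumes K: "compact K" "convex K" and xx: "x \<le> xr" and sl: "\<forall>t\<in>{x..xr}. \<exists>y. mk t y \<in> K"
  shows "\<exists>\<gamma>. path \<gamma> \<and> path_image \<gamma> \<subseteq> (\<lambda>t. mk t (lo K t)) ` {x..xr} \<and>
      pathstart \<gamma> = mk x (lo K x) \<and> pathfinish \<gamma> = mk xr (lo K xr) \<and>
      ctrl \<gamma> (xr - x + 2 * diameter K)"
proof -
  define f where "f = lo K"
  note P = lo_props[OF K sl, folded f_def]
  obtain m where m: "m \<in> {x..xr}" "\<forall>t\<in>{x..xr}. f m \<le> f t"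
    using continuous_attains_inf[OF compact_Icc _ P(2)] xx by auto
  define c1 where "c1 u = x + u*(m-x)" for u
  define c2 where "c2 u = m + u*(xr-m)" for u
  define g1 where "g1 u = mk (c1 u) (f (c1 u))" for u
  define g2 where "g2 u = mk (c2 u) (f (c2 u))" for u
  have c1r: "c1 u \<in> {x..m}" if "u \<in> {0..1}" for u
  proof -
    have "u*(m-x) \<le> 1*(m-x)" using that m by (intro mult_right_mono) auto
    then show ?thesis using that m by (auto simp: c1_def)
  qed
  have c2r: "c2 u \<in> {m..xr}" if "u \<in> {0..1}" for u
  proof -
    have "u*(xr-m) \<le> 1*(xr-m)" using that m by (intro mult_right_mono) auto
    then show ?thesis using that m by (auto simp: c2_def)
  qed
  have c1m: "c1 s \<le> c1 t" if "s \<le> t" for s t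
    using that m by (auto simp: c1_def intro!: mult_right_mono)
  have c2m: "c2 s \<le> c2 t" if "s \<le> t" for s t
    using that m by (auto simp: c2_def intro!: mult_right_mono)
  have path1: "path g1" unfolding path_def g1_def
  proof (intro continuous_intros)
    show cc: "continuous_on {0..1} c1" unfolding c1_def by (intro continuous_intros)
    show "continuous_on {0..1} (\<lambda>u. f (c1 u))"
      by (rule continuous_on_compose2[OF P(2) cc]) (use c1r m in force)
  qed
  have path2: "path g2" unfolding path_def g2_def
  proof (intro continuous_intros)
    show cc: "continuous_on {0..1} c2" unfolding c2_def by (intro continuous_intros)
    show "continuous_on {0..1} (\<lambda>u. f (c2 u))"
      by (rule continuous_on_compose2[OF P(2) cc]) (use c2r m in force)
  qed
  have ctrl1: "ctrl g1 ((m - x) + (f x - f m))" unfolding ctrl_def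
  proof (intro exI[of _ "\<lambda>u. c1 u - f (c1 u)"] conjI allI impI)
    show "c1 1 - f (c1 1) - (c1 0 - f (c1 0)) \<le> m - x + (f x - f m)" by (simp add: c1_def)
  next
    fix s t :: real assume st: "0 \<le> s" "s \<le> t" "t \<le> 1"
    have r: "c1 s \<in> {x..m}" "c1 t \<in> {x..m}" using c1r st by auto
    have le: "c1 s \<le> c1 t" using c1m st by blast
    have "f (c1 t) \<le> f (c1 s)"
      using convex_dec[OF P(1)[folded f_def], of "c1 s" "c1 t" m] r le m by auto
    then show "dist (g1 s) (g1 t) \<le> c1 t - f (c1 t) - (c1 s - f (c1 s))"
      using dist_mk_le[of "c1 s" "f (c1 s)" "c1 t" "f (c1 t)"] le by (simp add: g1_def)
  qed
  have ctrl2: "ctrl g2 ((xr - m) + (f xr - f m))" unfolding ctrl_def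
  proof (intro exI[of _ "\<lambda>u. c2 u + f (c2 u)"] conjI allI impI)
    show "c2 1 + f (c2 1) - (c2 0 + f (c2 0)) \<le> xr - m + (f xr - f m)" by (simp add: c2_def)
  next
    fix s t :: real assume st: "0 \<le> s" "s \<le> t" "t \<le> 1"
    have r: "c2 s \<in> {m..xr}" "c2 t \<in> {m..xr}" using c2r st by auto
    have le: "c2 s \<le> c2 t" using c2m st by blast
    have "f (c2 s) \<le> f (c2 t)"
      using convex_inc[OF P(1)[folded f_def], of m "c2 s" "c2 t"] r le m by auto
    then show "dist (g2 s) (g2 t) \<le> c2 t + f (c2 t) - (c2 s + f (c2 s))"
      using dist_mk_le[of "c2 s" "f (c2 s)" "c2 t" "f (c2 t)"] le by (simp add: g2_def)
  qed
  have je: "pathfinish g1 = pathstart g2"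
    by (simp add: pathfinish_def pathstart_def g1_def g2_def c1_def c2_def)
  have bdK: "bounded K" using K(1) compact_imp_bounded by blast
  have memx: "mk x (f x) \<in> K" "mk m (f m) \<in> K" "mk xr (f xr) \<in> K"
    using P(3)[folded f_def] m xx by auto
  have d1: "f x - f m \<le> diameter K"
    using dist_ge_comp2[of "mk x (f x)" "mk m (f m)"] diameter_bounded_bound[OF bdK memx(1,2)] by simp
  have d2: "f xr - f m \<le> diameter K"
    using dist_ge_comp2[of "mk xr (f xr)" "mk m (f m)"] diameter_bounded_bound[OF bdK memx(3,2)] by simp
  show ?thesis
  proof (intro exI[of _ "g1 +++ g2"] conjI)
    show "path (g1 +++ g2)" using path1 path2 je by (rule path_join_imp)
    have "path_image g1 \<subseteq> (\<lambda>t. mk t (lo K t)) ` {x..xr}"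
      unfolding path_image_def g1_def f_def using c1r m by (force)
    moreover have "path_image g2 \<subseteq> (\<lambda>t. mk t (lo K t)) ` {x..xr}"
      unfolding path_image_def g2_def f_def using c2r m by (force)
    ultimately show "path_image (g1 +++ g2) \<subseteq> (\<lambda>t. mk t (lo K t)) ` {x..xr}"
      using path_image_join_subset by blast
    show "pathstart (g1 +++ g2) = mk x (lo K x)" using pathstart_join[of g1 g2] by (simp add: pathstart_def g1_def c1_def f_def)
    show "pathfinish (g1 +++ g2) = mk xr (lo K xr)" using pathfinish_join[of g1 g2] by (simp add: pathfinish_def g2_def c2_def f_def)
    show "ctrl (g1 +++ g2) (xr - x + 2 * diameter K)"
      by (rule ctrl_mono[OF ctrl_join[OF ctrl1 ctrl2 je]]) (use d1 d2 in simp)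
  qed
qed



lemma convex_polygon_props:
  assumes "convex_polygon S" shows "compact S" "convex S" "interior S \<noteq> {}"
  using assms unfolding convex_polygon_def
  by (auto intro: compact_convex_hull finite_imp_compact)

lemma not_interior_if_bigger1:
  fixes S :: "(real^2) set" and q :: "real^2"
  assumes "\<forall>p\<in>S. p$1 \<le> M" "q$1 = M" shows "q \<notin> interior S"
proof
  assume "q \<in> interior S"
  then obtain e where e: "e > 0" "\<forall>d. \<bar>d\<bar> < e \<longrightarrow> mk (q$1 + d) (q$2) \<in> S" using interior_mk by blast
  then have "mk (q$1 + e/2) (q$2) \<in> S" by simp
  then have "q$1 + e/2 \<le> M" using assms(1) by force
  then show False using assms e by simp
qed

lemma not_interior_if_bigger2:
  fixes S :: "(real^2) set" and q :: "real^2"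
  assumes "\<forall>p\<in>S. p$2 \<le> M" "q$2 = M" shows "q \<notin> interior S"
proof
  assume "q \<in> interior S"
  then obtain e where e: "e > 0" "\<forall>d. \<bar>d\<bar> < e \<longrightarrow> mk (q$1) (q$2 + d) \<in> S" using interior_mk by blast
  then have "mk (q$1) (q$2 + e/2) \<in> S" by simp
  then have "q$2 + e/2 \<le> M" using assms(1) by force
  then show False using assms e by simp
qed

locale cfg =
  fixes P0 :: "(real^2) set" and H :: "nat \<Rightarrow> (real^2) set" and h :: nat
  assumes C: "in_class_C P0 H h"
begin

abbreviation "I \<equiv> {1..h}"
abbreviation "P \<equiv> poly_domain P0 H h"

lemma P0: "compact P0" "convex P0" "interior P0 \<noteq> {}"
  using C convex_polygon_props unfolding in_class_C_def by auto

lemma HH0: "i \<in> I \<Longrightarrow> compact (H i)" "i \<in> I \<Longrightarrow> convex (H i)" "i \<in> I \<Longrightarrow> H i \<subseteq> interior P0"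
  "i \<in> I \<Longrightarrow> interior (H i) \<noteq> {}"
  using C convex_polygon_props unfolding in_class_C_def by auto

lemma HH: "i \<in> I \<Longrightarrow> compact (H i)" "i \<in> I \<Longrightarrow> convex (H i)" "i \<in> I \<Longrightarrow> H i \<subseteq> interior P0"
  "i \<in> I \<Longrightarrow> H i \<noteq> {}"
  using HH0 interior_empty by (auto simp del: atLeastAtMost_iff) (metis interior_empty)

lemma disj: "i \<in> I \<Longrightarrow> j \<in> I \<Longrightarrow> i \<noteq> j \<Longrightarrow> H i \<inter> H j = {}"
  using C unfolding in_class_C_def by auto

lemma P_iff: "p \<in> P \<longleftrightarrow> p \<in> P0 \<and> (\<forall>i\<in>I. p \<notin> interior (H i))"
  unfolding poly_domain_def by auto

lemma bounded_P: "bounded P"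
  using P0(1) compact_imp_bounded bounded_subset P_iff by blast

lemma frontier_in_P: "frontier P0 \<subseteq> P"
proof
  fix p assume p: "p \<in> frontier P0"
  have "p \<in> P0" using p frontier_subset_closed compact_imp_closed P0(1) by blast
  moreover have "p \<notin> interior P0" using p by (simp add: frontier_def)
  moreover have "interior (H i) \<subseteq> interior P0" if "i \<in> I" for i
    using HH(3)[OF that] interior_subset by blast
  ultimately show "p \<in> P" using P_iff by blast
qed

definition xr :: "nat \<Rightarrow> real" where "xr i = Sup ((\<lambda>p. p$1) ` H i)"

lemma xr: assumes "i \<in> I" shows "\<exists>p\<in>H i. p$1 = xr i" "\<And>p. p \<in> H i \<Longrightarrow> p$1 \<le> xr i"
proof -
  have cpt: "compact ((\<lambda>p. p$1) ` H i)" using HH(1)[OF assms] by (intro compact_continuous_image continuous_intros)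
  have ne: "(\<lambda>p. p$1) ` H i \<noteq> {}" using HH(4)[OF assms] by simp
  have "xr i \<in> (\<lambda>p. p$1) ` H i" unfolding xr_def
    using cpt ne by (intro closed_contains_Sup) (auto intro: compact_imp_closed bounded_imp_bdd_above compact_imp_bounded)
  then show "\<exists>p\<in>H i. p$1 = xr i" by auto
  show "p$1 \<le> xr i" if "p \<in> H i" for p unfolding xr_def
    using cpt that by (intro cSup_upper) (auto intro: bounded_imp_bdd_above compact_imp_bounded)
qed

definition S :: "real^2 \<Rightarrow> nat set" where "S q = {j\<in>I. q$1 < xr j}"

end



context cfg begin

lemma P0ne: "P0 \<noteq> {}" using P0(3) interior_empty by (metis interior_subset subset_empty)

definition pX where "pX = (SOME p. p \<in> P0 \<and> (\<forall>q\<in>P0. q$1 \<le> p$1))"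
definition pY where "pY = (SOME p. p \<in> P0 \<and> (\<forall>q\<in>P0. q$2 \<le> p$2))"

lemma pX: "pX \<in> P0" "\<And>q. q \<in> P0 \<Longrightarrow> q$1 \<le> pX$1"
proof -
  have "\<exists>p. p \<in> P0 \<and> (\<forall>q\<in>P0. q$1 \<le> p$1)"
  proof -
    have "continuous_on P0 (\<lambda>p. p$1)" by (intro continuous_intros)
    then show ?thesis using continuous_attains_sup[OF P0(1) P0ne, of "\<lambda>p. p$1"] by blast
  qed
  then have "pX \<in> P0 \<and> (\<forall>q\<in>P0. q$1 \<le> pX$1)" unfolding pX_def by (rule someI_ex)
  then show "pX \<in> P0" "\<And>q. q \<in> P0 \<Longrightarrow> q$1 \<le> pX$1" by auto
qed

lemma pY: "pY \<in> P0" "\<And>q. q \<in> P0 \<Longrightarrow> q$2 \<le> pY$2"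
proof -
  have "\<exists>p. p \<in> P0 \<and> (\<forall>q\<in>P0. q$2 \<le> p$2)"
  proof -
    have "continuous_on P0 (\<lambda>p. p$2)" by (intro continuous_intros)
    then show ?thesis using continuous_attains_sup[OF P0(1) P0ne, of "\<lambda>p. p$2"] by blast
  qed
  then have "pY \<in> P0 \<and> (\<forall>q\<in>P0. q$2 \<le> pY$2)" unfolding pY_def by (rule someI_ex)
  then show "pY \<in> P0" "\<And>q. q \<in> P0 \<Longrightarrow> q$2 \<le> pY$2" by auto
qed

lemma pXY_frontier: "pX \<in> frontier P0" "pY \<in> frontier P0"
proof -
  have cl: "closure P0 = P0" using P0(1) compact_imp_closed closure_closed by blast
  show "pX \<in> frontier P0" unfolding frontier_def cl
    using pX not_interior_if_bigger1[of P0 "pX$1" pX] by blast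
  show "pY \<in> frontier P0" unfolding frontier_def cl
    using pY not_interior_if_bigger2[of P0 "pY$2" pY] by blast
qed

definition L :: "real^2 \<Rightarrow> real" where
  "L q = (pY$2 - q$2) + (pX$1 - q$1) + 4 * (\<Sum>j\<in>S q. diameter (H j))"

lemma sumdiam_nonneg: "0 \<le> (\<Sum>j\<in>S q. diameter (H j))"
  unfolding S_def by (intro sum_nonneg diameter_ge_0 compact_imp_bounded HH(1)) auto

lemma finite_S: "finite (S q)" unfolding S_def by simp

lemma interior_slice_open: "open {y'. mk x y' \<in> interior K}"
proof -
  have "continuous_on UNIV (\<lambda>y. mk x y)" by (intro continuous_intros)
  then show ?thesis using continuous_open_vimage[OF open_interior, of "mk x" K]
    by (simp add: continuous_on_eq_continuous_at vimage_def)
qed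

lemma case_empty:
  assumes q: "q \<in> P" and J: "\<forall>j\<in>I. \<forall>y'. q$2 \<le> y' \<longrightarrow> mk (q$1) y' \<notin> interior (H j)"
  shows "\<exists>\<gamma>. path \<gamma> \<and> path_image \<gamma> \<subseteq> P \<and> pathstart \<gamma> = q \<and> pathfinish \<gamma> \<in> frontier P0 \<and> ctrl \<gamma> (L q)"
proof -
  define x where "x = q$1"
  define y where "y = q$2"
  have qe: "q = mk x y" by (simp add: x_def y_def mk_eta)
  have qP0: "q \<in> P0" using q P_iff by blast
  define T where "T = {y..} \<inter> {y'. mk x y' \<in> P0}"
  have yT: "y \<in> T" using qP0 qe by (simp add: T_def)
  have "closed T" unfolding T_def
    by (intro closed_Int closed_atLeast closed_slice compact_imp_closed P0(1))
  moreover have "bdd_above T" unfolding T_def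
    using bounded_slice(2)[OF compact_imp_bounded[OF P0(1)], of x] by (meson bdd_above_Int2)
  ultimately have ytT: "Sup T \<in> T" using yT by (intro closed_contains_Sup) auto
  define yt where "yt = Sup T"
  have yty: "y \<le> yt" "mk x yt \<in> P0" using ytT by (auto simp: yt_def T_def)
  have "mk x yt \<notin> interior P0"
  proof
    assume "mk x yt \<in> interior P0"
    then obtain e where e: "e > 0" "\<forall>d. \<bar>d\<bar> < e \<longrightarrow> mk x (yt + d) \<in> P0" using interior_mk[of "mk x yt" P0] by auto
    then have "yt + e/2 \<in> T" using yty by (auto simp: T_def)
    then have "yt + e/2 \<le> yt" unfolding yt_def using \<open>bdd_above T\<close> by (rule cSup_upper)
    then show False using e by simp
  qed
  moreover have "closure P0 = P0" using P0(1) compact_imp_closed closure_closed by blast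
  ultimately have fr: "mk x yt \<in> frontier P0"
    using yty by (simp add: frontier_def)
  show ?thesis
  proof (intro exI[of _ "linepath q (mk x yt)"] conjI)
    show "path (linepath q (mk x yt))" by simp
    show "path_image (linepath q (mk x yt)) \<subseteq> P"
    proof
      fix p assume "p \<in> path_image (linepath q (mk x yt))"
      then have ps: "p \<in> closed_segment q (mk x yt)" by simp
      have pc: "p$1 = x" "y \<le> p$2" using seg_coord[OF ps] yty qe by auto
      have "p \<in> P0" using ps closed_segment_subset[OF qP0 yty(2) P0(2)] by blast
      moreover have "p \<notin> interior (H j)" if "j \<in> I" for j
        using J that pc mk_eta[of p] unfolding x_def y_def by metis
      ultimately show "p \<in> P" using P_iff by blast
    qed
    show "pathstart (linepath q (mk x yt)) = q" by simp
    show "pathfinish (linepath q (mk x yt)) \<in> frontier P0" using fr by simp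
    have "dist q (mk x yt) \<le> yt - y" using dist_mk_le[of x y x yt] qe yty by simp
    moreover have "yt \<le> pY$2" using pY(2)[OF yty(2)] by simp
    moreover have "x \<le> pX$1" using pX(2)[OF qP0] by (simp add: x_def)
    ultimately have "dist q (mk x yt) \<le> L q"
      using sumdiam_nonneg[of q] unfolding L_def x_def y_def by linarith
    then show "ctrl (linepath q (mk x yt)) (L q)" by (rule ctrl_mono[OF ctrl_linepath])
  qed
qed

end


context cfg begin

lemma step:
  assumes q: "q \<in> P"
    and IH: "\<And>q'. q' \<in> P \<Longrightarrow> card (S q') < card (S q) \<Longrightarrow>
      \<exists>\<gamma>. path \<gamma> \<and> path_image \<gamma> \<subseteq> P \<and> pathstart \<gamma> = q' \<and> pathfinish \<gamma> \<in> frontier P0 \<and> ctrl \<gamma> (L q')"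
  shows "\<exists>\<gamma>. path \<gamma> \<and> path_image \<gamma> \<subseteq> P \<and> pathstart \<gamma> = q \<and> pathfinish \<gamma> \<in> frontier P0 \<and> ctrl \<gamma> (L q)"
proof -
  define x where "x = q$1"
  define y where "y = q$2"
  have qe: "q = mk x y" by (simp add: x_def y_def mk_eta)
  have qP0: "q \<in> P0" using q P_iff by blast
  define B where "B j = {y'. y \<le> y' \<and> mk x y' \<in> interior (H j)}" for j
  define J where "J = {j\<in>I. B j \<noteq> {}}"
  show ?thesis
  proof (cases "J = {}")
    case True
    then show ?thesis using case_empty[OF q] unfolding J_def B_def x_def y_def by blast
  next
    case False
    have fJ: "finite J" by (simp add: J_def)
    define mm where "mm = Min ((\<lambda>j. Inf (B j)) ` J)"
    have "mm \<in> (\<lambda>j. Inf (B j)) ` J" unfolding mm_def using fJ False by (intro Min_in) auto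
    then obtain i where iJ: "i \<in> J" "Inf (B i) = mm" by auto
    have imin: "Inf (B i) \<le> Inf (B j)" if "j \<in> J" for j
      using iJ(2) fJ that unfolding mm_def by (auto intro: Min_le)
    have iI: "i \<in> I" and Bne: "B i \<noteq> {}" using iJ by (auto simp: J_def)
    have bddB: "bdd_below (B j)" for j unfolding B_def bdd_below_def by auto
    define ys where "ys = Inf (B i)"
    have yys: "y \<le> ys" unfolding ys_def using Bne by (intro cInf_greatest) (auto simp: B_def)
    have "ys \<in> closure (B i)" unfolding ys_def using Bne bddB by (rule closure_contains_Inf)
    moreover have "closure (B i) \<subseteq> {y'. mk x y' \<in> H i}"
    proof (rule closure_minimal)
      show "B i \<subseteq> {y'. mk x y' \<in> H i}" using interior_subset by (auto simp: B_def)
      show "closed {y'. mk x y' \<in> H i}" using HH(1)[OF iI] compact_imp_closed closed_slice by blast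
    qed
    ultimately have ysH: "mk x ys \<in> H i" by blast
    have noint: "mk x y' \<notin> interior (H j)" if "j \<in> I" "y \<le> y'" "y' < ys" for j y'
    proof
      assume a: "mk x y' \<in> interior (H j)"
      then have "y' \<in> B j" using that by (simp add: B_def)
      then have "j \<in> J" "Inf (B j) \<le> y'" using that bddB by (auto simp: J_def intro: cInf_lower)
      then show False using imin[of j] that by (simp add: ys_def)
    qed
    have noint2: "mk x ys \<notin> interior (H j)" if "j \<in> I" for j
    proof
      assume a: "mk x ys \<in> interior (H j)"
      show False
      proof (cases "ys = y")
        case True
        then show False using a q qe that P_iff by blast
      next
        case False
        then have yl: "y < ys" using yys by simp
        have "open {y'. mk x y' \<in> interior (H j)}" by (rule interior_slice_open)
        then obtain e where e: "e > 0" "ball ys e \<subseteq> {y'. mk x y' \<in> interior (H j)}"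
          using a by (meson mem_Collect_eq open_contains_ball)
        define mn where "mn = min (e/2) ((ys - y)/2)"
        have mn1: "mn \<le> (ys - y)/2" unfolding mn_def by (rule min.cobounded2)
        have mn2: "mn \<le> e/2" unfolding mn_def by (rule min.cobounded1)
        have mn3: "mn > 0" using yl e by (simp add: mn_def)
        note mn = mn1 mn2 mn3
        define y' where "y' = ys - mn"
        have "y' \<in> ball ys e" using e mn by (auto simp: y'_def dist_real_def)
        then have mi: "mk x y' \<in> interior (H j)" using e by blast
        have "y \<le> y' \<and> y' < ys" using yl mn unfolding y'_def by auto
        then show False using noint that mi by blast
      qed
    qed
    have ylo: "lo (H i) x = ys"
    proof (rule ccontr)
      assume ne: "lo (H i) x \<noteq> ys"
      have lm: "mk x (lo (H i) x) \<in> H i" "lo (H i) x \<le> ys" using lo_mem[OF HH(1)[OF iI] ysH] by auto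
      then have ll: "lo (H i) x < ys" using ne by simp
      obtain b where b: "b \<in> B i" using Bne by blast
      have bys: "ys \<le> b" unfolding ys_def using b bddB by (rule cInf_lower)
      have bint: "mk x b \<in> interior (H i)" using b by (simp add: B_def)
      then have "b \<noteq> ys" using noint2[OF iI] by auto
      then have bg: "ys < b" using bys by simp
      have "open_segment (mk x b) (mk x (lo (H i) x)) \<subseteq> interior (H i)"
        using HH(2)[OF iI] bint lm(1) closure_subset by (intro in_interior_closure_convex_segment) auto
      moreover have "mk x ys \<in> open_segment (mk x b) (mk x (lo (H i) x))"
      proof -
        define u where "u = (b - ys) / (b - lo (H i) x)"
        have u: "0 < u" "u < 1" using bg ll by (auto simp: u_def divide_less_eq_1)
        have "u * (b - lo (H i) x) = b - ys" using bg ll by (simp add: u_def)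
        then have "(1-u)*b + u * lo (H i) x = ys" by (simp add: algebra_simps)
        then have "mk x ys = (1 - u) *\<^sub>R mk x b + u *\<^sub>R mk x (lo (H i) x)"
          unfolding mk_comb by (simp add: algebra_simps)
        moreover have "mk x b \<noteq> mk x (lo (H i) x)" using bg ll by (simp add: mk_eq_iff)
        ultimately show ?thesis using u by (auto simp: in_segment)
      qed
      ultimately show False using noint2[OF iI] by blast
    qed
    have xxr: "x < xr i"
    proof -
      obtain b where b: "b \<in> B i" using Bne by blast
      have bint: "mk x b \<in> interior (H i)" using b by (simp add: B_def)
      then obtain e where e: "e > 0" "\<forall>d. \<bar>d\<bar> < e \<longrightarrow> mk (x + d) b \<in> H i"
        using interior_mk[of "mk x b" "H i"] by auto
      then have "mk (x + e/2) b \<in> H i" by simp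
      then have "x + e/2 \<le> xr i" using xr(2)[OF iI] by force
      then show ?thesis using e by simp
    qed
    obtain pr where pr: "pr \<in> H i" "pr$1 = xr i" using xr(1)[OF iI] by blast
    have sl: "\<forall>t\<in>{x..xr i}. \<exists>y'. mk t y' \<in> H i"
    proof
      fix t assume t: "t \<in> {x..xr i}"
      define u where "u = (t - x)/(xr i - x)"
      have u: "0 \<le> u" "u \<le> 1" using t xxr by (auto simp: u_def divide_le_eq_1)
      have "(1 - u) *\<^sub>R mk x ys + u *\<^sub>R pr \<in> H i"
        using HH(2)[OF iI] ysH pr(1) u by (intro convexD_alt) auto
      moreover have "u * (xr i - x) = t - x" using xxr by (simp add: u_def)
      then have "((1 - u) *\<^sub>R mk x ys + u *\<^sub>R pr)$1 = t" using pr(2) by (simp add: algebra_simps)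
      ultimately show "\<exists>y'. mk t y' \<in> H i" by (metis mk_eta)
    qed
    obtain gc where gc: "path gc" "path_image gc \<subseteq> (\<lambda>t. mk t (lo (H i) t)) ` {x..xr i}"
      "pathstart gc = mk x (lo (H i) x)" "pathfinish gc = mk (xr i) (lo (H i) (xr i))"
      "ctrl gc (xr i - x + 2 * diameter (H i))"
      using chain[OF HH(1)[OF iI] HH(2)[OF iI] _ sl] xxr by auto
    define q' where "q' = mk (xr i) (lo (H i) (xr i))"
    have chainP: "mk t (lo (H i) t) \<in> P" if t: "t \<in> {x..xr i}" for t
    proof -
      obtain y0 where "mk t y0 \<in> H i" using sl t by blast
      then have mem: "mk t (lo (H i) t) \<in> H i" using lo_mem(1)[OF HH(1)[OF iI]] by blast
      have "mk t (lo (H i) t) \<notin> interior (H j)" if j: "j \<in> I" for j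
      proof (cases "j = i")
        case True
        show ?thesis
        proof
          assume "mk t (lo (H i) t) \<in> interior (H j)"
          then obtain e where e: "e > 0" "\<forall>d. \<bar>d\<bar> < e \<longrightarrow> mk t (lo (H i) t + d) \<in> H i"
            using interior_mk[of "mk t (lo (H i) t)" "H j"] True by auto
          then have "mk t (lo (H i) t - e/2) \<in> H i" using e(2)[rule_format, of "-e/2"] by simp
          then have "lo (H i) t \<le> lo (H i) t - e/2" using lo_mem(2)[OF HH(1)[OF iI]] by blast
          then show False using e by simp
        qed
      next
        case False
        then have "H i \<inter> H j = {}" using disj iI j by blast
        then show ?thesis using mem interior_subset by blast
      qed
      moreover have "mk t (lo (H i) t) \<in> P0" using mem HH(3)[OF iI] interior_subset by blast
      ultimately show ?thesis using P_iff by blast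
    qed
    have gcP: "path_image gc \<subseteq> P" using gc(2) chainP by blast
    have q'P: "q' \<in> P" using gcP gc(4) pathfinish_in_path_image[of gc] unfolding q'_def by auto
    have Ssub: "S q' \<subseteq> S q - {i}" using xxr by (auto simp: S_def q'_def x_def)
    have iS: "i \<in> S q" using iI xxr by (simp add: S_def x_def)
    have cardlt: "card (S q') < card (S q)"
    proof -
      have "S q' \<subset> S q" using Ssub iS by blast
      then show ?thesis by (rule psubset_card_mono[OF finite_S])
    qed
    obtain gr where gr: "path gr" "path_image gr \<subseteq> P" "pathstart gr = q'" "pathfinish gr \<in> frontier P0"
      "ctrl gr (L q')" using IH[OF q'P cardlt] by blast
    define g0 where "g0 = linepath q (mk x ys)"
    have g0P: "path_image g0 \<subseteq> P"
    proof
      fix p assume "p \<in> path_image g0"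
      then have ps: "p \<in> closed_segment q (mk x ys)" by (simp add: g0_def)
      have pc: "p$1 = x" "y \<le> p$2" "p$2 \<le> ys" using seg_coord[OF ps] yys qe by auto
      have "mk x ys \<in> P0" using ysH HH(3)[OF iI] interior_subset by blast
      then have "p \<in> P0" using ps closed_segment_subset[OF qP0 _ P0(2)] by blast
      moreover have "p \<notin> interior (H j)" if "j \<in> I" for j
      proof (cases "p$2 = ys")
        case True then show ?thesis using noint2[OF that] pc mk_eta[of p] by metis
      next
        case False then show ?thesis using noint[OF that pc(2)] pc mk_eta[of p] by (metis order_le_less)
      qed
      ultimately show "p \<in> P" using P_iff by blast
    qed
    have bdHi: "bounded (H i)" using HH(1)[OF iI] compact_imp_bounded by blast
    have q'H: "q' \<in> H i"
    proof -
      obtain y0 where "mk (xr i) y0 \<in> H i" using sl xxr by fastforce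
      then show ?thesis unfolding q'_def by (rule lo_mem(1)[OF HH(1)[OF iI]])
    qed
    have dd: "ys - lo (H i) (xr i) \<le> diameter (H i)"
      using dist_ge_comp2[of "mk x ys" q'] diameter_bounded_bound[OF bdHi ysH q'H] by (simp add: q'_def)
    have sumS: "diameter (H i) + (\<Sum>j\<in>S q'. diameter (H j)) \<le> (\<Sum>j\<in>S q. diameter (H j))"
    proof -
      have "(\<Sum>j\<in>S q'. diameter (H j)) \<le> (\<Sum>j\<in>S q - {i}. diameter (H j))"
        using Ssub finite_S[of q] by (intro sum_mono2) (auto simp: S_def intro!: diameter_ge_0 compact_imp_bounded HH(1))
      moreover have "(\<Sum>j\<in>S q. diameter (H j)) = diameter (H i) + (\<Sum>j\<in>S q - {i}. diameter (H j))"
        using iS finite_S[of q] by (simp add: sum.remove)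
      ultimately show ?thesis by simp
    qed
    have dHi: "0 \<le> diameter (H i)" using bdHi by (rule diameter_ge_0)
    have ctot: "ctrl (g0 +++ (gc +++ gr)) (dist q (mk x ys) + ((xr i - x + 2 * diameter (H i)) + L q'))"
    proof -
      have j1: "pathfinish gc = pathstart gr" using gc(4) gr(3) by (simp add: q'_def)
      have j2: "pathfinish g0 = pathstart (gc +++ gr)" using gc(3) ylo by (simp add: g0_def)
      show ?thesis unfolding g0_def
        by (rule ctrl_join[OF ctrl_linepath ctrl_join[OF gc(5) gr(5) j1] j2[unfolded g0_def]])
    qed
    have "dist q (mk x ys) \<le> ys - y" using dist_mk_le[of x y x ys] qe yys by simp
    then have "dist q (mk x ys) + ((xr i - x + 2 * diameter (H i)) + L q') \<le> L q"
      using dd sumS dHi unfolding L_def q'_def x_def y_def by simp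
    show ?thesis
    proof (intro exI[of _ "g0 +++ (gc +++ gr)"] conjI)
      have j1: "pathfinish gc = pathstart gr" using gc(4) gr(3) by (simp add: q'_def)
      have j2: "pathfinish g0 = pathstart (gc +++ gr)" using gc(3) ylo by (simp add: g0_def)
      show "path (g0 +++ (gc +++ gr))"
        by (rule path_join_imp[OF _ path_join_imp[OF gc(1) gr(1) j1] j2]) (simp add: g0_def)
      show "path_image (g0 +++ (gc +++ gr)) \<subseteq> P"
        using g0P gcP gr(2) path_image_join_subset by (metis Un_least subset_trans)
      show "pathstart (g0 +++ (gc +++ gr)) = q" by (simp add: g0_def)
      show "pathfinish (g0 +++ (gc +++ gr)) \<in> frontier P0" using gr(4) by simp
      show "ctrl (g0 +++ (gc +++ gr)) (L q)" using ctot \<open>_ \<le> L q\<close> by (rule ctrl_mono)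
    qed
  qed
qed

lemma main: "q \<in> P \<Longrightarrow>
  \<exists>\<gamma>. path \<gamma> \<and> path_image \<gamma> \<subseteq> P \<and> pathstart \<gamma> = q \<and> pathfinish \<gamma> \<in> frontier P0 \<and> ctrl \<gamma> (L q)"
proof (induction "card (S q)" arbitrary: q rule: less_induct)
  case less
  show ?case by (rule step[OF less.prems]) (rule less.hyps; simp)
qed

end


theorem lemma3:
  shows "\<forall>c>0. \<exists>C>0. \<forall>(h::nat) P0 H (\<Delta>::real).
     h \<ge> 1 \<longrightarrow> in_class_C P0 H h \<longrightarrow> \<Delta> \<le> c / real h \<longrightarrow>
     (\<forall>i\<in>{1..h}. diameter (H i) \<le> \<Delta> * diameter (poly_domain P0 H h)) \<longrightarrow>
     (\<forall>s\<in>poly_domain P0 H h. \<exists>g. path g \<and> path_image g \<subseteq> poly_domain P0 H h \<and>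
        pathstart g = s \<and> pathfinish g \<in> frontier P0 \<and>
        path_length g \<le> ereal (C * diameter (poly_domain P0 H h)))"
proof (intro allI impI ballI)
  fix c :: real assume c: "c > 0"
  show "\<exists>C>0. \<forall>(h::nat) P0 H (\<Delta>::real).
     h \<ge> 1 \<longrightarrow> in_class_C P0 H h \<longrightarrow> \<Delta> \<le> c / real h \<longrightarrow>
     (\<forall>i\<in>{1..h}. diameter (H i) \<le> \<Delta> * diameter (poly_domain P0 H h)) \<longrightarrow>
     (\<forall>s\<in>poly_domain P0 H h. \<exists>g. path g \<and> path_image g \<subseteq> poly_domain P0 H h \<and>
        pathstart g = s \<and> pathfinish g \<in> frontier P0 \<and>
        path_length g \<le> ereal (C * diameter (poly_domain P0 H h)))"
  proof (intro exI[of _ "2 + 4*c"] conjI allI impI ballI)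
    show "0 < 2 + 4*c" using c by simp
  next
    fix h :: nat and P0 H and \<Delta> :: real and s
    assume h: "1 \<le> h" and C: "in_class_C P0 H h" and D: "\<Delta> \<le> c / real h"
      and dH: "\<forall>i\<in>{1..h}. diameter (H i) \<le> \<Delta> * diameter (poly_domain P0 H h)"
      and s: "s \<in> poly_domain P0 H h"
    interpret cfg P0 H h by (rule cfg.intro[OF C])
    define Dm where "Dm = diameter P"
    obtain g where g: "path g" "path_image g \<subseteq> P" "pathstart g = s" "pathfinish g \<in> frontier P0" "ctrl g (L s)"
      using main[OF s] by blast
    have Dm0: "0 \<le> Dm" unfolding Dm_def by (rule diameter_ge_0[OF bounded_P])
    have pYP: "pY \<in> P" "pX \<in> P" using pXY_frontier frontier_in_P by auto
    have t1: "pY$2 - s$2 \<le> Dm"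
      using dist_ge_comp2[of pY s] diameter_bounded_bound[OF bounded_P pYP(1) s] by (simp add: Dm_def)
    have t2: "pX$1 - s$1 \<le> Dm"
      using dist_ge_comp1[of pX s] diameter_bounded_bound[OF bounded_P pYP(2) s] by (simp add: Dm_def)
    have h1: "(1::nat) \<in> {1..h}" using h by simp
    have bdH: "0 \<le> diameter (H j)" if "j \<in> {1..h}" for j
      using that by (intro diameter_ge_0 compact_imp_bounded HH(1))
    have hD: "real h * \<Delta> \<le> c" using D h by (simp add: field_simps)
    have "(\<Sum>j\<in>S s. diameter (H j)) \<le> (\<Sum>j\<in>{1..h}. diameter (H j))"
      by (intro sum_mono2) (auto simp: S_def intro: bdH)
    also have "\<dots> \<le> (\<Sum>j\<in>{1..h}. \<Delta> * Dm)" using dH by (intro sum_mono) (simp add: Dm_def)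
    also have "\<dots> = (real h * \<Delta>) * Dm" by simp
    also have "\<dots> \<le> c * Dm" using hD Dm0 by (rule mult_right_mono)
    finally have "(\<Sum>j\<in>S s. diameter (H j)) \<le> c * Dm" .
    then have "L s \<le> (2 + 4*c) * Dm" using t1 t2 unfolding L_def by (simp add: algebra_simps)
    then have "path_length g \<le> ereal ((2 + 4*c) * Dm)"
      using ctrl_length[OF g(5)] by (meson ereal_less_eq(3) order_trans)
    then show "\<exists>g. path g \<and> path_image g \<subseteq> poly_domain P0 H h \<and>
        pathstart g = s \<and> pathfinish g \<in> frontier P0 \<and>
        path_length g \<le> ereal ((2 + 4*c) * diameter (poly_domain P0 H h))"
      using g unfolding Dm_def by blast
  qed
qed


end
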